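(* Let $\{(\mathbf{x}_i,y_i)\}_{i=1}^N$, $\mathbf{x}_i\in\mathbb{R}^n$, $y_i\in\{-1,1\}$, be linearly separable through the origin with margin $\gamma$ (there is a unit $\mathbf{w}_s$ with $y_i\mathbf{w}_s^T\mathbf{x}_i>\gamma/2$ for all $i$) and satisfy $\|\mathbf{x}_i\|<R$ for all $i$. Train a linear model without bias, $\mathcal{L}(\mathbf{w})=\sum_{i=1}^N l(y_i\mathbf{w}^T\mathbf{x}_i)$ with $l$ the logistic loss, by gradient descent $\mathbf{w}(t+1)=\mathbf{w}(t)-\eta\nabla\mathcal{L}(\mathbf{w}(t))$, and let $\hat{\mathbf{w}}=\arg\min\|\mathbf{w}\|^2$ s.t. $y_i\mathbf{w}^T\mathbf{x}_i\ge1$ for all $i$. Suppose $\mathbf{w}(t)=\hat{\mathbf{w}}\log t+\boldsymbol\rho(t)$ with $\|\boldsymbol\rho(t)\|\le B$. Let $c(t)=\frac{\mathbf{w}(t)^T\hat{\mathbf{w}}}{\|\mathbf{w}(t)\|\|\hat{\mathbf{w}}\|}=\cos\theta(t)$. Then at each gradient step $$c(t+1)\le c(t)+\frac{\eta NRe^{BR}B\gamma}{2t\log t\,\|\mathbf{w}(t)\|}+\frac{3\eta NRe^{BR}B^2\gamma^2}{8t\log^2t\,\|\mathbf{w}(t)\|}+\mathcal{O}\left(\frac{1}{t^2\|\mathbf{w}(t)\|^2}\right).$$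
   Context: $\theta(t)$ is the angle between $\mathbf{w}(t)$ and $\hat{\mathbf{w}}$; $t$ counts gradient descent steps (epochs). *)

theory Defs
  imports "HOL-Analysis.Analysis"
begin

definition logistic_loss :: "real \<Rightarrow> real" where
  "logistic_loss u = ln (1 + exp (- u))"

definition emp_loss :: "nat \<Rightarrow> (nat \<Rightarrow> real ^ 'n) \<Rightarrow> (nat \<Rightarrow> real) \<Rightarrow> real ^ 'n \<Rightarrow> real" where
  "emp_loss N x y w = (\<Sum>i<N. logistic_loss (y i * (w \<bullet> x i)))"

definition is_max_margin :: "nat \<Rightarrow> (nat \<Rightarrow> real ^ 'n) \<Rightarrow> (nat \<Rightarrow> real) \<Rightarrow> real ^ 'n \<Rightarrow> bool" where
  "is_max_margin N x y wh \<longleftrightarrow>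
     (\<forall>i<N. y i * (wh \<bullet> x i) \<ge> 1) \<and>
     (\<forall>v. (\<forall>i<N. y i * (v \<bullet> x i) \<ge> 1) \<longrightarrow> (norm wh)\<^sup>2 \<le> (norm v)\<^sup>2)"

definition cos_angle :: "real ^ 'n \<Rightarrow> real ^ 'n \<Rightarrow> real" where
  "cos_angle u v = (u \<bullet> v) / (norm u * norm v)"

end

theory Submission
  imports Defs
begin


lemma exp_diff_le:
  fixes a b :: real assumes "a \<le> b"
  shows "exp b - exp a \<le> exp b * (b - a)"
proof -
  have "1 + (a - b) \<le> exp (a - b)" by (rule exp_ge_add_one_self)
  then have "exp b * (1 + (a - b)) \<le> exp b * exp (a - b)" by simp
  also have "\<dots> = exp a" by (simp add: exp_diff)
  finally show ?thesis by (simp add: algebra_simps)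
qed

lemma exp_quad:
  fixes x :: real assumes "\<bar>x\<bar> \<le> 1"
  shows "exp x \<le> 1 + x + x\<^sup>2"
proof (cases "x \<ge> 0")
  case True then show ?thesis using exp_bound assms by auto
next
  case False
  have "1 - x \<le> exp (-x)" using exp_ge_add_one_self[of "-x"] by simp
  then have "exp x \<le> 1 / (1 - x)" using False
    by (simp add: exp_minus field_simps)
  also have "\<dots> \<le> 1 + x + x\<^sup>2"
  proof -
    have "x * (x * x) \<le> 0" using False mult_nonpos_nonneg[of x "x*x"] by simp
    then have "1 \<le> (1 - x) * (1 + x + x\<^sup>2)"
      by (simp add: algebra_simps power2_eq_square)
    then show ?thesis using False by (simp add: field_simps)
  qed
  finally show ?thesis .
qed

lemma normalize_diff:
  fixes x y :: "'a::real_normed_vector"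
  assumes "x \<noteq> 0"
  shows "norm ((1/norm x) *\<^sub>R x - (1/norm y) *\<^sub>R y) \<le> 2 * norm (x - y) / norm x"
proof (cases "y = 0")
  case True then show ?thesis using assms by (simp add: norm_minus_commute)
next
  case False
  have "(1/norm x) *\<^sub>R x - (1/norm y) *\<^sub>R y = (1/norm x) *\<^sub>R (x - y) + (1/norm x - 1/norm y) *\<^sub>R y"
    by (simp add: algebra_simps)
  then have "norm ((1/norm x) *\<^sub>R x - (1/norm y) *\<^sub>R y) \<le> norm ((1/norm x) *\<^sub>R (x - y)) + norm ((1/norm x - 1/norm y) *\<^sub>R y)"
    by (metis norm_triangle_ineq)
  also have "norm ((1/norm x) *\<^sub>R (x - y)) = norm (x - y) / norm x" by simp
  also have "norm ((1/norm x - 1/norm y) *\<^sub>R y) = \<bar>norm y - norm x\<bar> / norm x"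
    using False assms by (simp add: field_simps abs_mult)
  also have "\<bar>norm y - norm x\<bar> \<le> norm (x - y)"
    by (metis abs_minus_commute norm_triangle_ineq3)
  finally show ?thesis using assms by (simp add: divide_right_mono add_divide_distrib[symmetric])
qed

lemma dir_close:
  fixes v u :: "'a::real_normed_vector"
  assumes "v \<noteq> 0" "norm u = 1" "\<mu> \<ge> 0"
  shows "norm ((1/norm v) *\<^sub>R v - u) \<le> 2 * norm (v - \<mu> *\<^sub>R u) / norm v"
proof -
  have "(1/norm v) *\<^sub>R v - u = (1/norm v) *\<^sub>R (v - norm v *\<^sub>R u)" using assms by (simp add: algebra_simps)
  then have e: "norm ((1/norm v) *\<^sub>R v - u) = norm (v - norm v *\<^sub>R u) / norm v" by simp
  have "v - norm v *\<^sub>R u = (v - \<mu> *\<^sub>R u) + (\<mu> - norm v) *\<^sub>R u" by (simp add: algebra_simps)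
  then have "norm (v - norm v *\<^sub>R u) \<le> norm (v - \<mu> *\<^sub>R u) + \<bar>\<mu> - norm v\<bar>"
    using assms by (metis mult.right_neutral norm_scaleR norm_triangle_ineq)
  also have "\<bar>\<mu> - norm v\<bar> \<le> norm (v - \<mu> *\<^sub>R u)"
    using assms norm_triangle_ineq3[of v "\<mu> *\<^sub>R u"] by (simp add: abs_minus_commute)
  finally show ?thesis unfolding e using assms by (simp add: divide_right_mono)
qed

lemma cos_step:
  fixes w e u :: "'a::real_inner"
  assumes u1: "norm u = 1" and w0: "w \<noteq> 0" and lam: "lm \<ge> 0"
    and v0: "w + lm *\<^sub>R u \<noteq> 0"
  shows "((1/norm (w + lm *\<^sub>R u + e)) *\<^sub>R (w + lm *\<^sub>R u + e)) \<bullet> u - ((1/norm w) *\<^sub>R w) \<bullet> u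
     \<le> 2 * lm * (1 - ((1/norm w) *\<^sub>R w) \<bullet> u) / norm (w + lm *\<^sub>R u)
       + norm ((1/norm (w + lm *\<^sub>R u + e)) *\<^sub>R (w + lm *\<^sub>R u + e) - (1/norm (w + lm *\<^sub>R u)) *\<^sub>R (w + lm *\<^sub>R u))
         * norm (u - (1/norm w) *\<^sub>R w)"
proof -
  define v where "v = w + lm *\<^sub>R u"
  define a where "a = (1/norm w) *\<^sub>R w"
  define av where "av = (1/norm v) *\<^sub>R v"
  define a' where "a' = (1/norm (v + e)) *\<^sub>R (v + e)"
  define c where "c = a \<bullet> u"
  have na: "norm a = 1" using w0 by (simp add: a_def)
  have aa: "a \<bullet> a = 1" using na by (simp add: dot_square_norm)
  have uu: "u \<bullet> u = 1" using u1 by (simp add: dot_square_norm)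
  have na': "norm a' \<le> 1" by (simp add: a'_def)
  have "a' \<bullet> a \<le> norm a' * norm a" by (rule norm_cauchy_schwarz)
  also have "\<dots> \<le> 1" using na na' by simp
  finally have a'a: "a' \<bullet> a \<le> 1" .
  have c1: "c \<le> 1" using norm_cauchy_schwarz[of a u] na u1 by (simp add: c_def)
  have step1: "a' \<bullet> u - a \<bullet> u \<le> (a' - av) \<bullet> (u - a) + (av - a) \<bullet> (u - a)"
    using a'a aa by (simp add: inner_diff_left inner_diff_right inner_commute)
  have "(a' - av) \<bullet> (u - a) \<le> norm (a' - av) * norm (u - a)" by (rule norm_cauchy_schwarz)
  moreover have "(av - a) \<bullet> (u - a) = (1 - c) * (lm - norm w + norm v) / norm v"
  proof -
    have wa: "w = norm w *\<^sub>R a" using w0 by (simp add: a_def)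
    have "av \<bullet> (u - a) = (w \<bullet> (u - a) + lm * (u \<bullet> (u - a))) / norm v"
      by (simp add: av_def v_def inner_add_left)
    also have "w \<bullet> (u - a) = norm w * (c - 1)"
      by (subst wa) (simp add: inner_diff_right aa c_def algebra_simps)
    also have "u \<bullet> (u - a) = 1 - c" by (simp add: inner_diff_right uu c_def inner_commute)
    finally have "av \<bullet> (u - a) = (norm w * (c - 1) + lm * (1 - c)) / norm v" .
    moreover have "a \<bullet> (u - a) = c - 1" by (simp add: inner_diff_right aa c_def)
    ultimately have "(av - a) \<bullet> (u - a) = (norm w * (c - 1) + lm * (1 - c)) / norm v - (c - 1)"
      by (simp add: inner_diff_left)
    also have "\<dots> = (1 - c) * (lm - norm w + norm v) / norm v"
      using v0 unfolding v_def[symmetric] by (simp add: field_simps)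
    finally show ?thesis .
  qed
  moreover have "(1 - c) * (lm - norm w + norm v) / norm v \<le> 2 * lm * (1 - c) / norm v"
  proof -
    have "norm v \<le> norm w + lm" unfolding v_def using norm_triangle_ineq[of w "lm *\<^sub>R u"] u1 lam by simp
    then have "(1 - c) * (lm - norm w + norm v) \<le> (1 - c) * (2 * lm)"
      using c1 by (intro mult_left_mono) auto
    then show ?thesis by (simp add: divide_right_mono algebra_simps)
  qed
  ultimately show ?thesis using step1
    unfolding a'_def[symmetric] v_def[symmetric] av_def[symmetric] a_def[symmetric] c_def[symmetric]
    by linarith
qed

lemma osc_sum:
  fixes f V :: "nat \<Rightarrow> real"
  assumes dec: "\<forall>t\<ge>T. V (Suc t) \<le> V t - (f t)\<^sup>2 / t" and "t \<ge> T"
  shows "V (t + n) \<le> V t - (\<Sum>k<n. (f (t + k))\<^sup>2 / (t + k))"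
proof (induction n)
  case 0 then show ?case by simp
next
  case (Suc n)
  have "V (t + Suc n) \<le> V (t + n) - (f (t + n))\<^sup>2 / (t + n)"
    using dec \<open>t \<ge> T\<close> by (metis add_Suc_right le_add1 le_trans of_nat_add)
  then show ?case using Suc by simp
qed

lemma osc_mono:
  fixes f V :: "nat \<Rightarrow> real"
  assumes dec: "\<forall>t\<ge>T. V (Suc t) \<le> V t - (f t)\<^sup>2 / t" and "t \<ge> T" "t \<le> t'"
  shows "V t' \<le> V t"
proof -
  obtain n where n: "t' = t + n" using \<open>t \<le> t'\<close> le_Suc_ex by blast
  have "(\<Sum>k<n. (f (t + k))\<^sup>2 / (t + k)) \<ge> 0" by (intro sum_nonneg) auto
  then have "V (t + n) \<le> V t" using osc_sum[OF dec \<open>t \<ge> T\<close>, of n] by linarith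
  then show ?thesis using n by simp
qed

lemma osc_lemma:
  fixes f V :: "nat \<Rightarrow> real"
  assumes T1: "T \<ge> 1" and L: "L > 0"
    and var: "\<forall>t\<ge>T. \<bar>f (Suc t) - f t\<bar> \<le> L / t"
    and dec: "\<forall>t\<ge>T. V (Suc t) \<le> V t - (f t)\<^sup>2 / t"
    and lo: "\<forall>t\<ge>T. V t \<ge> lo"
    and eps: "\<epsilon> > 0"
  shows "\<exists>T0. \<forall>t\<ge>T0. f t < \<epsilon>"
proof (rule ccontr)
  assume "\<not> ?thesis"
  then have freq: "\<forall>T0. \<exists>t\<ge>T0. f t \<ge> \<epsilon>" by (meson not_le)
  define \<kappa> where "\<kappa> = \<epsilon>^3 / (4 * (2 * L + \<epsilon>))"
  have kpos: "\<kappa> > 0" using eps L by (simp add: \<kappa>_def)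
  have window: "\<exists>n. V (t + n) \<le> V t - \<kappa>" if tT: "t \<ge> T" and ft: "f t \<ge> \<epsilon>" for t
  proof -
    have tpos: "real t > 0" using tT T1 by simp
    define M where "M = nat \<lfloor>\<epsilon> * t / (2 * L)\<rfloor>"
    have M1: "real M + 1 > \<epsilon> * t / (2 * L)" unfolding M_def
      using eps L tpos by linarith
    have M2: "real M \<le> \<epsilon> * t / (2 * L)" unfolding M_def
      using eps L tpos by (simp add: of_nat_nat) 
    have lowk: "f (t + k) \<ge> \<epsilon> - L * k / t" for k
    proof (induction k)
      case 0 then show ?case using ft by simp
    next
      case (Suc k)
      have "\<bar>f (Suc (t + k)) - f (t + k)\<bar> \<le> L / (t + k)" using var[rule_format, of "t + k"] tT by simp
      moreover have "L / (t + k) \<le> L / t" using L tpos by (simp add: frac_le)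
      ultimately have "f (t + Suc k) \<ge> f (t + k) - L / t" by simp
      moreover have "\<epsilon> - L * Suc k / t = \<epsilon> - L * k / t - L / t" using tpos by (simp add: field_simps)
      ultimately show ?case using Suc by linarith
    qed
    have half: "f (t + k) \<ge> \<epsilon> / 2" if "k \<le> M" for k
    proof -
      have "L * k / t \<le> L * M / t" using that L tpos by (simp add: divide_right_mono)
      also have "\<dots> \<le> \<epsilon> / 2" using M2 L tpos by (simp add: field_simps)
      finally show ?thesis using lowk[of k] by linarith
    qed
    have termk: "(f (t + k))\<^sup>2 / (t + k) \<ge> (\<epsilon>/2)\<^sup>2 / (t + M)" if "k < Suc M" for k
    proof -
      have "(\<epsilon>/2)\<^sup>2 \<le> (f (t + k))\<^sup>2" using half[of k] that eps by (intro power_mono) auto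
      moreover have "real t + k \<le> t + M" using that by simp
      ultimately show ?thesis using tpos by (intro frac_le) auto
    qed
    have "(\<Sum>k<Suc M. (f (t + k))\<^sup>2 / (t + k)) \<ge> (\<Sum>k<Suc M. (\<epsilon>/2)\<^sup>2 / (t + M))"
      using termk by (intro sum_mono) auto
    moreover have "(\<Sum>k<Suc M. (\<epsilon>/2)\<^sup>2 / (t + M)) = (M + 1) * \<epsilon>\<^sup>2 / (4 * (t + M))"
      by (simp add: power_divide)
    moreover have "(M + 1) * \<epsilon>\<^sup>2 / (4 * (t + M)) \<ge> \<kappa>"
    proof -
      have "2 * L * (M + 1) > \<epsilon> * t" using M1 L by (simp add: field_simps)
      then have "(M + 1) * (2 * L + \<epsilon>) \<ge> \<epsilon> * (t + M)" using eps by (simp add: algebra_simps)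
      then have "\<epsilon>\<^sup>2 * ((M + 1) * (2 * L + \<epsilon>)) \<ge> \<epsilon>\<^sup>2 * (\<epsilon> * (t + M))"
        by (intro mult_left_mono) auto
      then show ?thesis unfolding \<kappa>_def using tpos L eps
        by (simp add: field_simps power2_eq_square power3_eq_cube) 
    qed
    ultimately show ?thesis using osc_sum[OF dec tT, of "Suc M"] by (intro exI[of _ "Suc M"]) linarith
  qed
  have iter: "\<exists>t\<ge>T. V t \<le> V T - K * \<kappa>" for K :: nat
  proof (induction K)
    case 0 then show ?case by auto
  next
    case (Suc K)
    then obtain t where t: "t \<ge> T" "V t \<le> V T - K * \<kappa>" by blast
    obtain t' where t': "t' \<ge> t" "f t' \<ge> \<epsilon>" using freq by blast
    have "V t' \<le> V t" using osc_mono[OF dec t(1) t'(1)] .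
    obtain n where "V (t' + n) \<le> V t' - \<kappa>" using window[of t'] t t' by auto
    then have "V (t' + n) \<le> V T - Suc K * \<kappa>" using \<open>V t' \<le> V t\<close> t by (simp add: algebra_simps)
    moreover have "t' + n \<ge> T" using t t' by simp
    ultimately show ?case by blast
  qed
  obtain K :: nat where K: "K > (V T - lo) / \<kappa>" using reals_Archimedean2 by blast
  then have "K * \<kappa> > V T - lo" using kpos by (simp add: field_simps)
  moreover obtain t where "t \<ge> T" "V t \<le> V T - K * \<kappa>" using iter by blast
  ultimately show False using lo by fastforce
qed

lemma gderiv_unique:
  fixes f :: "'a::real_inner \<Rightarrow> real"
  assumes "GDERIV f v :> g1" "GDERIV f v :> g2"
  shows "g1 = g2"
proof -
  have "(\<lambda>h. h \<bullet> g1) = (\<lambda>h. h \<bullet> g2)"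
    using has_derivative_unique assms unfolding gderiv_def by blast
  then have "(g1 - g2) \<bullet> g1 = (g1 - g2) \<bullet> g2" by meson
  then have "(g1 - g2) \<bullet> (g1 - g2) = 0" by (simp add: inner_diff_right)
  then show ?thesis by simp
qed

lemma logistic_deriv: "DERIV logistic_loss u :> - (1 / (1 + exp u))"
proof -
  have "DERIV (\<lambda>u. ln (1 + exp (- u))) u :> (1 / (1 + exp (-u))) * (exp (-u) * (-1))"
    by (rule derivative_eq_intros | simp add: add_pos_pos)+
  moreover have "(1 / (1 + exp (-u))) * (exp (-u) * (-1)) = - (1 / (1 + exp u))"
    by (simp add: exp_minus field_simps)
  ultimately show ?thesis unfolding logistic_loss_def[abs_def] by simp
qed

lemma emp_loss_grad:
  fixes x :: "nat \<Rightarrow> real ^ 'n"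
  shows "GDERIV (emp_loss N x y) v :> (\<Sum>i<N. (- (1 / (1 + exp (y i * (v \<bullet> x i))))) *\<^sub>R (y i *\<^sub>R x i))"
proof -
  have one: "GDERIV (\<lambda>v. logistic_loss (y i * (v \<bullet> x i))) v :> (- (1 / (1 + exp (y i * (v \<bullet> x i))))) *\<^sub>R (y i *\<^sub>R x i)" for i
  proof (rule GDERIV_DERIV_compose[where f = "\<lambda>v. y i * (v \<bullet> x i)"])
    show "GDERIV (\<lambda>v. y i * (v \<bullet> x i)) v :> y i *\<^sub>R x i"
      unfolding gderiv_def
      by (rule has_derivative_subst, rule derivative_eq_intros | simp)+
    show "DERIV logistic_loss (y i * (v \<bullet> x i)) :> - (1 / (1 + exp (y i * (v \<bullet> x i))))"
      by (rule logistic_deriv)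
  qed
  have "FDERIV (\<lambda>v. \<Sum>i<N. logistic_loss (y i * (v \<bullet> x i))) v :> (\<lambda>h. \<Sum>i<N. h \<bullet> ((- (1 / (1 + exp (y i * (v \<bullet> x i))))) *\<^sub>R (y i *\<^sub>R x i)))"
    using one unfolding gderiv_def by (intro has_derivative_sum) auto
  then show ?thesis unfolding gderiv_def emp_loss_def[abs_def] by (simp add: inner_sum_right)
qed



lemma sigma_approx:
  fixes t Q :: real assumes "t > 0" "Q > 0"
  shows "\<bar>t * (1 / (1 + t / Q)) - Q\<bar> \<le> Q\<^sup>2 / t"
proof -
  have "t * (1 / (1 + t / Q)) - Q = - (Q\<^sup>2 / (Q + t))"
    using assms by (simp add: field_simps power2_eq_square)
  then have "\<bar>t * (1 / (1 + t / Q)) - Q\<bar> = Q\<^sup>2 / (Q + t)" using assms by simp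
  also have "\<dots> \<le> Q\<^sup>2 / t" using assms by (intro divide_left_mono) auto
  finally show ?thesis .
qed

lemma exp_lip:
  fixes a b M :: real assumes "a \<le> M" "b \<le> M"
  shows "\<bar>exp a - exp b\<bar> \<le> exp M * \<bar>a - b\<bar>"
proof (cases "a \<le> b")
  case True
  have "exp b - exp a \<le> exp b * (b - a)" by (rule exp_diff_le[OF True])
  also have "\<dots> \<le> exp M * (b - a)" using True assms by (intro mult_right_mono) auto
  finally show ?thesis using True by (simp add: abs_if)
next
  case False
  have "exp a - exp b \<le> exp a * (a - b)" using False by (intro exp_diff_le) auto
  also have "\<dots> \<le> exp M * (a - b)" using False assms by (intro mult_right_mono) auto
  finally show ?thesis using False by (simp add: abs_if)
qed

lemma ln_step_bounds:
  fixes t :: real assumes "t \<ge> 1"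
  shows "t * (ln (t + 1) - ln t) \<le> 1" "1 - t * (ln (t + 1) - ln t) \<le> 1 / t"
    "ln (t + 1) - ln t \<le> 1 / t" "ln (t + 1) - ln t \<ge> 0"
proof -
  have "1 + 1/t = (t + 1) / t" using assms by (simp add: field_simps)
  then have eq: "ln (t + 1) - ln t = ln (1 + 1/t)" using assms by (simp add: ln_div)
  have up: "ln (1 + 1/t) \<le> 1/t" using assms by (intro ln_add_one_self_le_self) auto
  then show "t * (ln (t + 1) - ln t) \<le> 1" "ln (t + 1) - ln t \<le> 1 / t" using assms eq by (auto simp: field_simps)
  show "ln (t + 1) - ln t \<ge> 0" using assms by simp
  have "ln (t / (t + 1)) \<le> t / (t + 1) - 1" using assms by (intro ln_le_minus_one) auto
  moreover have "ln (t / (t + 1)) = - (ln (t + 1) - ln t)" using assms by (simp add: ln_div)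
  moreover have "t / (t + 1) - 1 = - (1 / (t + 1))" using assms by (simp add: field_simps)
  ultimately have "ln (t + 1) - ln t \<ge> 1 / (t + 1)" by linarith
  then have "t * (ln (t + 1) - ln t) \<ge> t / (t + 1)" using assms
    by (metis divide_inverse mult_left_mono inverse_eq_divide mult.right_neutral order_trans less_eq_real_def zero_less_one) 
  then have "1 - t * (ln (t + 1) - ln t) \<le> 1 / (t + 1)" using assms by (simp add: field_simps)
  also have "\<dots> \<le> 1 / t" using assms by (simp add: frac_le)
  finally show "1 - t * (ln (t + 1) - ln t) \<le> 1 / t" .
qed

lemma dynamics:
  fixes z w \<rho> :: "nat \<Rightarrow> 'a::real_inner" and wh :: 'a
  assumes Npos: "N > 0" and Rpos: "R > 0" and eta: "\<eta> > 0" and B0: "B \<ge> 0"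
    and zR: "\<forall>i<N. norm (z i) \<le> R"
    and marg: "\<forall>i<N. wh \<bullet> z i \<ge> 1"
    and upd: "\<forall>t. w (Suc t) = w t + \<eta> *\<^sub>R (\<Sum>i<N. (1 / (1 + exp (w t \<bullet> z i))) *\<^sub>R z i)"
    and dec: "\<forall>t\<ge>1. w t = ln (real t) *\<^sub>R wh + \<rho> t"
    and rb: "\<forall>t\<ge>1. norm (\<rho> t) \<le> B"
    and e: "e > 0"
  shows "\<exists>T. \<forall>t\<ge>T. norm (real t *\<^sub>R (w (Suc t) - w t) - wh) < e"
proof -
  define h where "h = norm wh"
  define m where "m i = wh \<bullet> z i" for i
  define q where "q i t = exp ((1 - m i) * ln (real t))" for i t
  define ee where "ee i t = exp (- (\<rho> t \<bullet> z i))" for i t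
  define G where "G t = \<eta> *\<^sub>R (\<Sum>i<N. (q i t * ee i t) *\<^sub>R z i)" for t
  define \<psi> where "\<psi> t = wh - G t" for t
  define E where "E t = real t *\<^sub>R (w (Suc t) - w t) - G t" for t
  define \<delta> where "\<delta> t = \<rho> (Suc t) - \<rho> t" for t
  define \<Phi> where "\<Phi> t r = \<eta> * (\<Sum>i<N. q i t * exp (- (r \<bullet> z i))) + wh \<bullet> r" for t r
  define K where "K = exp (B * R)"
  define cE where "cE = \<eta> * N * R * K\<^sup>2"
  define c1 where "c1 = cE + h"
  define Gb where "Gb = \<eta> * N * K * R"
  define P where "P = h + Gb"
  define c2 where "c2 = P + c1"
  define c4 where "c4 = P * c1 + \<eta> * N * K * R\<^sup>2 * c2\<^sup>2"
  define L where "L = \<eta> * N * R * K * (h * R + R * c2)"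
  have K1: "K \<ge> 1" unfolding K_def using B0 Rpos by simp
  have h0: "h \<ge> 0" by (simp add: h_def)
  have hm: "m i \<le> h * R" if "i < N" for i
  proof -
    have "m i \<le> norm wh * norm (z i)" unfolding m_def by (rule norm_cauchy_schwarz)
    also have "\<dots> \<le> h * R" unfolding h_def using zR that by (intro mult_left_mono) auto
    finally show ?thesis .
  qed
  have m1: "m i \<ge> 1" if "i < N" for i using marg that by (simp add: m_def)
  have rz: "\<bar>r \<bullet> z i\<bar> \<le> B * R" if "norm r \<le> B" "i < N" for r i
  proof -
    have "\<bar>r \<bullet> z i\<bar> \<le> norm r * norm (z i)" by (rule Cauchy_Schwarz_ineq2)
    also have "\<dots> \<le> B * R" using that zR B0 by (intro mult_mono) auto
    finally show ?thesis .
  qed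
  have q_pos: "q i t > 0" for i t by (simp add: q_def)
  have q_le1: "q i t \<le> 1" if "t \<ge> 1" "i < N" for i t
  proof -
    have "(1 - m i) * ln (real t) \<le> 0" using m1[OF that(2)] that(1)
      by (intro mult_nonpos_nonneg) auto
    then show ?thesis by (simp add: q_def)
  qed
  have ee_pos: "ee i t > 0" for i t by (simp add: ee_def)
  have ee_le: "ee i t \<le> K" if "t \<ge> 1" "i < N" for i t
    unfolding ee_def K_def using rz[OF rb[rule_format, OF that(1)] that(2)] by simp
  have G_bound: "norm (G t) \<le> Gb" if "t \<ge> 1" for t
  proof -
    have "norm (\<Sum>i<N. (q i t * ee i t) *\<^sub>R z i) \<le> (\<Sum>i<N. norm ((q i t * ee i t) *\<^sub>R z i))"
      by (rule norm_sum)
    also have "\<dots> \<le> (\<Sum>i<N. K * R)"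
    proof (intro sum_mono)
      fix i assume i: "i \<in> {..<N}"
      have "norm ((q i t * ee i t) *\<^sub>R z i) = q i t * ee i t * norm (z i)"
        using q_pos ee_pos by (simp add: abs_mult less_imp_le)
      also have "\<dots> \<le> 1 * K * R" using K1 q_le1[OF that] ee_le[OF that] zR i q_pos ee_pos
        by (intro mult_mono) (auto intro: less_imp_le order_trans[OF zero_le_one K1])
      finally show "norm ((q i t * ee i t) *\<^sub>R z i) \<le> K * R" by simp
    qed
    finally show ?thesis unfolding G_def Gb_def using eta by (simp add: mult_left_mono)
  qed
  have psi_bound: "norm (\<psi> t) \<le> P" if "t \<ge> 1" for t
    unfolding \<psi>_def P_def h_def using G_bound[OF that] norm_triangle_ineq4[of wh "G t"] by linarith
  have wz: "exp (w t \<bullet> z i) = real t / (q i t * ee i t)" if "t \<ge> 1" for t i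
  proof -
    have tpos: "real t > 0" using that by simp
    have "w t \<bullet> z i = ln (real t) * m i + \<rho> t \<bullet> z i"
      using dec that by (simp add: inner_add_left m_def)
    moreover have "q i t * ee i t = exp (ln (real t) - (ln (real t) * m i + \<rho> t \<bullet> z i))"
      unfolding q_def ee_def by (simp add: exp_add[symmetric] algebra_simps)
    ultimately have "q i t * ee i t = real t / exp (w t \<bullet> z i)"
      using tpos by (simp add: exp_diff)
    then show ?thesis using tpos q_pos[of i t] ee_pos[of i t] by (simp add: field_simps)
  qed
  have E_eq: "E t = \<eta> *\<^sub>R (\<Sum>i<N. (real t * (1 / (1 + real t / (q i t * ee i t))) - q i t * ee i t) *\<^sub>R z i)"
    if "t \<ge> 1" for t
  proof -
    have "real t *\<^sub>R (w (Suc t) - w t) = \<eta> *\<^sub>R (\<Sum>i<N. (real t * (1 / (1 + exp (w t \<bullet> z i)))) *\<^sub>R z i)"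
      using upd by (simp add: scaleR_sum_right mult.commute)
    then show ?thesis unfolding E_def G_def using wz[OF that]
      by (simp add: scaleR_diff_right[symmetric] sum_subtractf[symmetric] scaleR_diff_left)
  qed
  have E_bound: "norm (E t) \<le> cE / t" if "t \<ge> 1" for t
  proof -
    have tpos: "real t > 0" using that by simp
    have "norm (\<Sum>i<N. (real t * (1 / (1 + real t / (q i t * ee i t))) - q i t * ee i t) *\<^sub>R z i)
        \<le> (\<Sum>i<N. norm ((real t * (1 / (1 + real t / (q i t * ee i t))) - q i t * ee i t) *\<^sub>R z i))"
      (is "norm ?S \<le> _") by (rule norm_sum)
    also have "\<dots> \<le> (\<Sum>i<N. K\<^sup>2 / t * R)"
    proof (intro sum_mono)
      fix i assume i: "i \<in> {..<N}"
      have Qp: "q i t * ee i t > 0" using q_pos ee_pos by simp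
      have "q i t * ee i t \<le> 1 * K" using q_le1[OF that] ee_le[OF that] i q_pos[of i t] ee_pos[of i t] K1
        by (intro mult_mono) auto
      then have QK: "q i t * ee i t \<le> K" by simp
      have "\<bar>real t * (1 / (1 + real t / (q i t * ee i t))) - q i t * ee i t\<bar> \<le> (q i t * ee i t)\<^sup>2 / t"
        by (rule sigma_approx[OF tpos Qp])
      also have "\<dots> \<le> K\<^sup>2 / t" using Qp QK tpos by (intro divide_right_mono power_mono) auto
      finally have A: "\<bar>real t * (1 / (1 + real t / (q i t * ee i t))) - q i t * ee i t\<bar> \<le> K\<^sup>2 / t" .
      have "\<bar>real t * (1 / (1 + real t / (q i t * ee i t))) - q i t * ee i t\<bar> * norm (z i) \<le> K\<^sup>2 / t * R"
        using A zR i by (intro mult_mono) auto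
      then show "norm ((real t * (1 / (1 + real t / (q i t * ee i t))) - q i t * ee i t) *\<^sub>R z i) \<le> K\<^sup>2 / t * R"
        by simp
    qed
    finally have S: "norm ?S \<le> (\<Sum>i<N. K\<^sup>2 / t * R)" .
    have "norm (E t) = \<eta> * norm ?S" using eta by (simp add: E_eq[OF that])
    also have "\<dots> \<le> \<eta> * (\<Sum>i<N. K\<^sup>2 / t * R)" using S eta by (intro mult_left_mono) auto
    also have "\<dots> = cE / t" by (simp add: cE_def field_simps)
    finally show ?thesis .
  qed
  define eps where "eps t = E t + (1 - real t * (ln (real t + 1) - ln (real t))) *\<^sub>R wh" for t
  have delta_eq: "real t *\<^sub>R \<delta> t = eps t - \<psi> t" if "t \<ge> 1" for t
  proof -
    have r1: "\<rho> (Suc t) = w (Suc t) - ln (real t + 1) *\<^sub>R wh" using dec[rule_format, of "Suc t"] by (simp add: add.commute)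
    have r0: "\<rho> t = w t - ln (real t) *\<^sub>R wh" using dec that by simp
    have "real t *\<^sub>R \<delta> t = real t *\<^sub>R (w (Suc t) - w t) - (real t * (ln (real t + 1) - ln (real t))) *\<^sub>R wh"
      unfolding \<delta>_def r1 r0 by (simp add: algebra_simps)
    also have "real t *\<^sub>R (w (Suc t) - w t) = G t + E t" by (simp add: E_def)
    finally show ?thesis unfolding eps_def \<psi>_def by (simp add: algebra_simps)
  qed
  have eps_bound: "norm (eps t) \<le> c1 / t" if "t \<ge> 1" for t
  proof -
    have t1: "real t \<ge> 1" using that by simp
    have "norm (eps t) \<le> norm (E t) + norm ((1 - real t * (ln (real t + 1) - ln (real t))) *\<^sub>R wh)"
      unfolding eps_def by (rule norm_triangle_ineq)
    also have "norm ((1 - real t * (ln (real t + 1) - ln (real t))) *\<^sub>R wh) \<le> 1 / t * h"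
    proof -
      have "\<bar>1 - real t * (ln (real t + 1) - ln (real t))\<bar> \<le> 1 / t" using ln_step_bounds[OF t1] by simp
      then have "\<bar>1 - real t * (ln (real t + 1) - ln (real t))\<bar> * h \<le> 1 / t * h" using h0 by (rule mult_right_mono)
      then show ?thesis by (simp add: h_def)
    qed
    finally show ?thesis using E_bound[OF that] unfolding c1_def by (simp add: add_divide_distrib)
  qed
  have c1nn: "c1 \<ge> 0" unfolding c1_def cE_def using h0 eta Rpos by simp
  have delta_bound: "norm (\<delta> t) \<le> c2 / t" if "t \<ge> 1" for t
  proof -
    have t1: "real t \<ge> 1" using that by simp
    have "real t * norm (\<delta> t) = norm (eps t - \<psi> t)" using delta_eq[OF that] by (metis norm_scaleR abs_of_nat)
    also have "\<dots> \<le> norm (eps t) + norm (\<psi> t)" by (rule norm_triangle_ineq4)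
    also have "\<dots> \<le> c1 / t + P" using eps_bound[OF that] psi_bound[OF that] by simp
    also have "c1 / t \<le> c1 / 1" using t1 c1nn by (intro divide_left_mono) auto
    finally show ?thesis unfolding c2_def using t1 by (simp add: field_simps)
  qed
  have Pnn: "P \<ge> 0" unfolding P_def Gb_def using h0 eta Rpos K1 by simp
  have c2nn: "c2 \<ge> 0" unfolding c2_def using Pnn c1nn by simp
  obtain T1 :: nat where T1: "T1 \<ge> 1" "real T1 \<ge> c2 * R"
    using real_arch_simple[of "c2 * R"] by (metis le_cases nat_le_real_less not_less of_nat_1 of_nat_le_iff order_trans)
  have descent: "\<Phi> t (\<rho> (Suc t)) \<le> \<Phi> t (\<rho> t) - (norm (\<psi> t))\<^sup>2 / t + c4 / (real t)\<^sup>2"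
    if tT: "t \<ge> T1" for t
  proof -
    have t1: "t \<ge> 1" using tT T1 by simp
    have tpos: "real t > 0" using t1 by simp
    have dsmall: "norm (\<delta> t) * R \<le> 1"
    proof -
      have "norm (\<delta> t) * R \<le> c2 / t * R" using delta_bound[OF t1] Rpos by (intro mult_right_mono) auto
      also have "\<dots> \<le> 1" using T1 tT tpos by (simp add: field_simps)
      finally show ?thesis .
    qed
    have per: "q i t * exp (- ((\<rho> t + \<delta> t) \<bullet> z i)) \<le> q i t * ee i t - q i t * ee i t * (\<delta> t \<bullet> z i) + K * ((norm (\<delta> t))\<^sup>2 * R\<^sup>2)"
      if i: "i < N" for i
    proof -
      have dz: "\<bar>\<delta> t \<bullet> z i\<bar> \<le> norm (\<delta> t) * R"
        using Cauchy_Schwarz_ineq2[of "\<delta> t" "z i"] zR i by (meson mult_left_mono norm_ge_zero order_trans)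
      have "exp (- (\<delta> t \<bullet> z i)) \<le> 1 + (- (\<delta> t \<bullet> z i)) + (- (\<delta> t \<bullet> z i))\<^sup>2"
        using dz dsmall by (intro exp_quad) simp
      then have "ee i t * exp (- (\<delta> t \<bullet> z i)) \<le> ee i t * (1 - (\<delta> t \<bullet> z i) + (\<delta> t \<bullet> z i)\<^sup>2)"
        using ee_pos[of i t] by simp
      moreover have "exp (- ((\<rho> t + \<delta> t) \<bullet> z i)) = ee i t * exp (- (\<delta> t \<bullet> z i))"
        unfolding ee_def by (simp add: inner_add_left exp_add[symmetric])
      moreover have "ee i t * (\<delta> t \<bullet> z i)\<^sup>2 \<le> K * ((norm (\<delta> t))\<^sup>2 * R\<^sup>2)"
      proof -
        have "(\<delta> t \<bullet> z i)\<^sup>2 \<le> (norm (\<delta> t) * R)\<^sup>2" using power_mono[OF dz abs_ge_zero, of 2] by simp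
        then show ?thesis using ee_le[OF t1 i] ee_pos[of i t] by (intro mult_mono) (auto simp: power_mult_distrib)
      qed
      ultimately have "exp (- ((\<rho> t + \<delta> t) \<bullet> z i)) \<le> ee i t - ee i t * (\<delta> t \<bullet> z i) + K * ((norm (\<delta> t))\<^sup>2 * R\<^sup>2)"
        by (simp add: algebra_simps)
      then have "q i t * exp (- ((\<rho> t + \<delta> t) \<bullet> z i)) \<le> q i t * (ee i t - ee i t * (\<delta> t \<bullet> z i) + K * ((norm (\<delta> t))\<^sup>2 * R\<^sup>2))"
        using q_pos[of i t] by simp
      also have "\<dots> \<le> q i t * ee i t - q i t * ee i t * (\<delta> t \<bullet> z i) + K * ((norm (\<delta> t))\<^sup>2 * R\<^sup>2)"
      proof -
        have "q i t * (K * ((norm (\<delta> t))\<^sup>2 * R\<^sup>2)) \<le> 1 * (K * ((norm (\<delta> t))\<^sup>2 * R\<^sup>2))"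
          using q_le1[OF t1 i] K1 by (intro mult_right_mono) auto
        then show ?thesis by (simp add: algebra_simps)
      qed
      finally show ?thesis .
    qed
    have "(\<Sum>i<N. q i t * exp (- ((\<rho> t + \<delta> t) \<bullet> z i))) \<le> (\<Sum>i<N. q i t * ee i t - q i t * ee i t * (\<delta> t \<bullet> z i) + K * ((norm (\<delta> t))\<^sup>2 * R\<^sup>2))"
      using per by (intro sum_mono) auto
    also have "\<dots> = (\<Sum>i<N. q i t * ee i t) - (\<Sum>i<N. q i t * ee i t * (\<delta> t \<bullet> z i)) + N * K * (norm (\<delta> t))\<^sup>2 * R\<^sup>2"
      by (simp add: sum.distrib sum_subtractf)
    finally have S: "(\<Sum>i<N. q i t * exp (- ((\<rho> t + \<delta> t) \<bullet> z i))) \<le> (\<Sum>i<N. q i t * ee i t) - (\<Sum>i<N. q i t * ee i t * (\<delta> t \<bullet> z i)) + N * K * (norm (\<delta> t))\<^sup>2 * R\<^sup>2" .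
    have Gd: "G t \<bullet> \<delta> t = \<eta> * (\<Sum>i<N. q i t * ee i t * (\<delta> t \<bullet> z i))"
      unfolding G_def by (simp add: inner_sum_right sum_distrib_left inner_commute[of _ "\<delta> t"])
    have Phi0: "\<Phi> t (\<rho> t) = \<eta> * (\<Sum>i<N. q i t * ee i t) + wh \<bullet> \<rho> t" unfolding \<Phi>_def ee_def by simp
    have "\<Phi> t (\<rho> (Suc t)) = \<eta> * (\<Sum>i<N. q i t * exp (- ((\<rho> t + \<delta> t) \<bullet> z i))) + wh \<bullet> \<rho> t + wh \<bullet> \<delta> t"
      unfolding \<Phi>_def \<delta>_def by (simp add: inner_diff_right)
    also have "\<dots> \<le> \<eta> * ((\<Sum>i<N. q i t * ee i t) - (\<Sum>i<N. q i t * ee i t * (\<delta> t \<bullet> z i)) + N * K * (norm (\<delta> t))\<^sup>2 * R\<^sup>2) + wh \<bullet> \<rho> t + wh \<bullet> \<delta> t"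
      using S eta by simp
    also have "\<dots> = \<Phi> t (\<rho> t) + \<psi> t \<bullet> \<delta> t + \<eta> * N * K * R\<^sup>2 * (norm (\<delta> t))\<^sup>2"
      unfolding Phi0 \<psi>_def using Gd by (simp add: inner_diff_left algebra_simps)
    finally have st1: "\<Phi> t (\<rho> (Suc t)) \<le> \<Phi> t (\<rho> t) + \<psi> t \<bullet> \<delta> t + \<eta> * N * K * R\<^sup>2 * (norm (\<delta> t))\<^sup>2" .
    have "real t * (\<psi> t \<bullet> \<delta> t) = \<psi> t \<bullet> (real t *\<^sub>R \<delta> t)" by simp
    also have "\<dots> = \<psi> t \<bullet> eps t - (norm (\<psi> t))\<^sup>2" unfolding delta_eq[OF t1]
      by (simp add: inner_diff_right power2_norm_eq_inner)
    also have "\<psi> t \<bullet> eps t \<le> P * (c1 / t)"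
      using norm_cauchy_schwarz[of "\<psi> t" "eps t"] psi_bound[OF t1] eps_bound[OF t1] Pnn
      by (meson mult_mono norm_ge_zero order_trans)
    finally have "real t * (\<psi> t \<bullet> \<delta> t) \<le> P * (c1 / t) - (norm (\<psi> t))\<^sup>2" by simp
    then have pd: "\<psi> t \<bullet> \<delta> t \<le> P * c1 / (real t)\<^sup>2 - (norm (\<psi> t))\<^sup>2 / t"
      using tpos by (simp add: field_simps power2_eq_square)
    have "(norm (\<delta> t))\<^sup>2 \<le> (c2 / t)\<^sup>2" using delta_bound[OF t1] by (intro power_mono) auto
    then have dd: "\<eta> * N * K * R\<^sup>2 * (norm (\<delta> t))\<^sup>2 \<le> \<eta> * N * K * R\<^sup>2 * c2\<^sup>2 / (real t)\<^sup>2"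
    proof -
      have "\<eta> * N * K * R\<^sup>2 * (norm (\<delta> t))\<^sup>2 \<le> \<eta> * N * K * R\<^sup>2 * (c2 / t)\<^sup>2"
        using \<open>(norm (\<delta> t))\<^sup>2 \<le> (c2 / t)\<^sup>2\<close> eta K1 by (intro mult_left_mono) auto
      then show ?thesis by (simp add: power_divide)
    qed
    show ?thesis using st1 pd dd unfolding c4_def by (simp add: add_divide_distrib)
  qed
  have Phi_mono: "\<Phi> (Suc t) r \<le> \<Phi> t r" if t1: "t \<ge> 1" for t r
  proof -
    have "q i (Suc t) \<le> q i t" if i: "i < N" for i
    proof -
      have "ln (real t) \<le> ln (real (Suc t))" using t1 by simp
      then have "(1 - m i) * ln (real (Suc t)) \<le> (1 - m i) * ln (real t)"
        using m1[OF i] by (intro mult_left_mono_neg) auto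
      then show ?thesis unfolding q_def by simp
    qed
    then have "(\<Sum>i<N. q i (Suc t) * exp (- (r \<bullet> z i))) \<le> (\<Sum>i<N. q i t * exp (- (r \<bullet> z i)))"
      by (intro sum_mono mult_right_mono) auto
    then show ?thesis unfolding \<Phi>_def using eta by simp
  qed
  have Phi_lower: "\<Phi> t r \<ge> - (h * B)" if "norm r \<le> B" for t r
  proof -
    have "(\<Sum>i<N. q i t * exp (- (r \<bullet> z i))) \<ge> 0" using q_pos by (intro sum_nonneg) (simp add: less_imp_le)
    moreover have "wh \<bullet> r \<ge> - (h * B)"
    proof -
      have "\<bar>wh \<bullet> r\<bar> \<le> h * norm r" unfolding h_def by (rule Cauchy_Schwarz_ineq2)
      also have "\<dots> \<le> h * B" using that h0 by (intro mult_left_mono) auto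
      finally show ?thesis by linarith
    qed
    ultimately show ?thesis unfolding \<Phi>_def using eta mult_nonneg_nonneg[of \<eta> "\<Sum>i<N. q i t * exp (- (r \<bullet> z i))"] by linarith
  qed
  have psi_var: "norm (\<psi> (Suc t) - \<psi> t) \<le> L / t" if t1: "t \<ge> 1" for t
  proof -
    have tpos: "real t > 0" using t1 by simp
    have per: "\<bar>q i t * ee i t - q i (Suc t) * ee i (Suc t)\<bar> \<le> K * (h * R + R * c2) / t" if i: "i < N" for i
    proof -
      have "\<bar>q i t - q i (Suc t)\<bar> \<le> exp 0 * \<bar>(1 - m i) * ln (real t) - (1 - m i) * ln (real (Suc t))\<bar>"
        unfolding q_def
      proof (rule exp_lip)
        show "(1 - m i) * ln (real t) \<le> 0" using m1[OF i] t1 by (intro mult_nonpos_nonneg) auto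
        show "(1 - m i) * ln (real (Suc t)) \<le> 0" using m1[OF i] t1 by (intro mult_nonpos_nonneg) auto
      qed
      also have "\<bar>(1 - m i) * ln (real t) - (1 - m i) * ln (real (Suc t))\<bar> = (m i - 1) * (ln (real t + 1) - ln (real t))"
      proof -
        have eq: "(1 - m i) * ln (real t) - (1 - m i) * ln (real (Suc t)) = (m i - 1) * (ln (real t + 1) - ln (real t))"
          by (simp add: algebra_simps)
        have "(m i - 1) * (ln (real t + 1) - ln (real t)) \<ge> 0"
          using m1[OF i] ln_step_bounds(4)[of "real t"] t1 by (intro mult_nonneg_nonneg) auto
        then show ?thesis unfolding eq by simp
      qed
      also have "\<dots> \<le> (h * R) * (1 / t)"
        using m1[OF i] hm[OF i] ln_step_bounds(3,4)[of "real t"] t1 by (intro mult_mono) auto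
      finally have qd: "\<bar>q i t - q i (Suc t)\<bar> \<le> h * R / t" by simp
      have "\<bar>ee i t - ee i (Suc t)\<bar> \<le> K * \<bar>(- (\<rho> t \<bullet> z i)) - (- (\<rho> (Suc t) \<bullet> z i))\<bar>"
        unfolding ee_def K_def
        using rz[OF rb[rule_format, OF t1] i] rz[OF rb[rule_format, of "Suc t"] i]
        by (intro exp_lip) auto
      also have "(- (\<rho> t \<bullet> z i)) - (- (\<rho> (Suc t) \<bullet> z i)) = \<delta> t \<bullet> z i" unfolding \<delta>_def by (simp add: inner_diff_left)
      also have "\<bar>\<delta> t \<bullet> z i\<bar> \<le> c2 / t * R"
        using Cauchy_Schwarz_ineq2[of "\<delta> t" "z i"] zR i delta_bound[OF t1]
        by (meson mult_mono norm_ge_zero order_trans)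
      finally have ed: "\<bar>ee i t - ee i (Suc t)\<bar> \<le> K * (c2 / t * R)" using K1 by (simp add: mult_left_mono)
      have eq: "q i t * ee i t - q i (Suc t) * ee i (Suc t) = (q i t - q i (Suc t)) * ee i t + q i (Suc t) * (ee i t - ee i (Suc t))"
        by (simp add: algebra_simps)
      have "\<bar>q i t * ee i t - q i (Suc t) * ee i (Suc t)\<bar> \<le> \<bar>(q i t - q i (Suc t)) * ee i t\<bar> + \<bar>q i (Suc t) * (ee i t - ee i (Suc t))\<bar>"
        unfolding eq by (rule abs_triangle_ineq)
      also have "\<dots> = \<bar>q i t - q i (Suc t)\<bar> * ee i t + q i (Suc t) * \<bar>ee i t - ee i (Suc t)\<bar>"
        using q_pos[of i "Suc t"] ee_pos[of i t] by (simp add: abs_mult)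
      also have "\<dots> \<le> h * R / t * K + 1 * (K * (c2 / t * R))"
      proof (rule add_mono)
        show "\<bar>q i t - q i (Suc t)\<bar> * ee i t \<le> h * R / t * K"
          using qd ee_le[OF t1 i] ee_pos[of i t] h0 Rpos tpos by (intro mult_mono) auto
        show "q i (Suc t) * \<bar>ee i t - ee i (Suc t)\<bar> \<le> 1 * (K * (c2 / t * R))"
          using ed q_le1[of "Suc t" i] i by (intro mult_mono) auto
      qed
      also have "\<dots> = K * (h * R + R * c2) / t" by (simp add: distrib_left add_divide_distrib mult.commute mult.left_commute)
      finally show ?thesis .
    qed
    have "\<psi> (Suc t) - \<psi> t = \<eta> *\<^sub>R (\<Sum>i<N. (q i t * ee i t - q i (Suc t) * ee i (Suc t)) *\<^sub>R z i)"
      unfolding \<psi>_def G_def by (simp add: scaleR_diff_right[symmetric] sum_subtractf[symmetric] scaleR_diff_left)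
    then have "norm (\<psi> (Suc t) - \<psi> t) = \<eta> * norm (\<Sum>i<N. (q i t * ee i t - q i (Suc t) * ee i (Suc t)) *\<^sub>R z i)"
      (is "_ = _ * norm ?S") using eta by simp
    also have "norm ?S \<le> (\<Sum>i<N. norm ((q i t * ee i t - q i (Suc t) * ee i (Suc t)) *\<^sub>R z i))" by (rule norm_sum)
    also have "\<dots> \<le> (\<Sum>i<N. K * (h * R + R * c2) / t * R)"
    proof (intro sum_mono)
      fix i assume "i \<in> {..<N}"
      then have "\<bar>q i t * ee i t - q i (Suc t) * ee i (Suc t)\<bar> * norm (z i) \<le> K * (h * R + R * c2) / t * R"
        using per zR K1 h0 Rpos c2nn by (intro mult_mono) (auto intro!: divide_nonneg_nonneg mult_nonneg_nonneg add_nonneg_nonneg)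
      then show "norm ((q i t * ee i t - q i (Suc t) * ee i (Suc t)) *\<^sub>R z i) \<le> K * (h * R + R * c2) / t * R"
        by simp
    qed
    also have "\<dots> = N * K * (h * R + R * c2) / t * R" by simp
    finally have "norm (\<psi> (Suc t) - \<psi> t) \<le> \<eta> * (N * K * (h * R + R * c2) / t * R)" using eta by (simp add: mult_left_mono)
    then show ?thesis unfolding L_def by (simp add: field_simps)
  qed
  have c4nn: "c4 \<ge> 0" unfolding c4_def using Pnn c1nn eta K1 by simp
  define T2 where "T2 = max 2 T1"
  define V where "V t = \<Phi> t (\<rho> t) + c4 / (real t - 1)" for t
  have Lnn: "L \<ge> 0" unfolding L_def using eta Rpos K1 h0 c2nn by simp
  have "\<exists>T0. \<forall>t\<ge>T0. norm (\<psi> t) < e / 2"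
  proof (rule osc_lemma[where T = T2 and L = "L + 1" and V = V and lo = "- (h * B)"])
    show "T2 \<ge> 1" "L + 1 > 0" "e / 2 > 0" using Lnn e by (auto simp: T2_def)
    show "\<forall>t\<ge>T2. \<bar>norm (\<psi> (Suc t)) - norm (\<psi> t)\<bar> \<le> (L + 1) / real t"
    proof (intro allI impI)
      fix t assume "t \<ge> T2"
      then have t1: "t \<ge> 1" by (simp add: T2_def)
      have "\<bar>norm (\<psi> (Suc t)) - norm (\<psi> t)\<bar> \<le> norm (\<psi> (Suc t) - \<psi> t)" by (rule norm_triangle_ineq3)
      also have "\<dots> \<le> L / t" by (rule psi_var[OF t1])
      also have "\<dots> \<le> (L + 1) / t" using t1 by (simp add: divide_right_mono)
      finally show "\<bar>norm (\<psi> (Suc t)) - norm (\<psi> t)\<bar> \<le> (L + 1) / real t" .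
    qed
    show "\<forall>t\<ge>T2. V (Suc t) \<le> V t - (norm (\<psi> t))\<^sup>2 / real t"
    proof (intro allI impI)
      fix t assume tT: "t \<ge> T2"
      then have t2: "real t \<ge> 2" and tT1: "t \<ge> T1" by (auto simp: T2_def)
      have t1: "t \<ge> 1" using tT by (simp add: T2_def)
      have frac: "c4 / (real t)\<^sup>2 + c4 / real t \<le> c4 / (real t - 1)"
      proof -
        have "1 / (real t)\<^sup>2 + 1 / real t \<le> 1 / (real t - 1)" using t2
          by (simp add: field_simps power2_eq_square)
        then have "c4 * (1 / (real t)\<^sup>2 + 1 / real t) \<le> c4 * (1 / (real t - 1))" using c4nn by (rule mult_left_mono)
        then show ?thesis by (simp add: distrib_left)
      qed
      have "V (Suc t) = \<Phi> (Suc t) (\<rho> (Suc t)) + c4 / real t" unfolding V_def by simp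
      also have "\<dots> \<le> \<Phi> t (\<rho> (Suc t)) + c4 / real t" using Phi_mono[OF t1] by simp
      also have "\<dots> \<le> \<Phi> t (\<rho> t) - (norm (\<psi> t))\<^sup>2 / t + c4 / (real t)\<^sup>2 + c4 / real t"
        using descent[OF tT1] by simp
      also have "\<dots> \<le> V t - (norm (\<psi> t))\<^sup>2 / real t" unfolding V_def using frac by simp
      finally show "V (Suc t) \<le> V t - (norm (\<psi> t))\<^sup>2 / real t" .
    qed
    show "\<forall>t\<ge>T2. V t \<ge> - (h * B)"
    proof (intro allI impI)
      fix t assume tT: "t \<ge> T2"
      then have t2: "real t \<ge> 2" and t1: "t \<ge> 1" by (auto simp: T2_def)
      have "c4 / (real t - 1) \<ge> 0" using c4nn t2 by simp
      then show "V t \<ge> - (h * B)" unfolding V_def using Phi_lower[OF rb[rule_format, OF t1], of t] by linarith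
    qed
  qed
  then obtain T3 where T3: "\<forall>t\<ge>T3. norm (\<psi> t) < e / 2" by blast
  obtain T4 :: nat where T4: "real T4 > 2 * cE / e" using reals_Archimedean2 by blast
  show ?thesis
  proof (intro exI[of _ "max 1 (max T3 T4)"] allI impI)
    fix t assume tT: "max 1 (max T3 T4) \<le> t"
    then have t1: "t \<ge> 1" and tT3: "t \<ge> T3" and tT4: "t \<ge> T4" by auto
    have tpos: "real t > 0" using t1 by simp
    have "real t > 2 * cE / e" using T4 tT4 by (meson less_le_trans of_nat_le_iff)
    then have "cE / t < e / 2" using e tpos by (simp add: field_simps)
    then have Eb: "norm (E t) < e / 2" using E_bound[OF t1] by linarith
    have "real t *\<^sub>R (w (Suc t) - w t) - wh = E t - \<psi> t" unfolding E_def \<psi>_def by simp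
    then have "norm (real t *\<^sub>R (w (Suc t) - w t) - wh) \<le> norm (E t) + norm (\<psi> t)"
      by (metis norm_triangle_ineq4)
    then show "norm (real t *\<^sub>R (w (Suc t) - w t) - wh) < e" using Eb T3 tT3 by fastforce
  qed
qed



lemma frac_cross:
  fixes a b c d :: real assumes "b > 0" "d > 0" "a * d \<le> c * b"
  shows "a / b \<le> c / d"
  using assms by (simp add: field_simps)

lemma final_arith:
  fixes h B \<kappa> t l nw nv G c X Y :: real
  assumes h: "h > 0" and B: "B \<ge> 0" and k: "\<kappa> > 0" and t: "t > 0" and l: "l > 0"
    and A1: "\<kappa> * l * h \<ge> 32 * B" and A2: "16 * G \<le> \<kappa> * h" and G: "G \<ge> 0"
    and nw: "nw \<ge> l * h / 2" and nv: "nv \<ge> l * h / 2"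
    and c: "1 - c \<le> 2 * B\<^sup>2 / nw\<^sup>2" and X: "0 \<le> X" "X \<le> 2 * B / nw"
    and Y: "0 \<le> Y" "Y \<le> 2 * G / (t * nv)"
  shows "2 * (h / t) * (1 - c) / nv + Y * X \<le> \<kappa> * B / (t * l * nw)"
proof -
  have lh: "l * h > 0" using l h by simp
  have nwp: "nw > 0" and nvp: "nv > 0" using nw nv lh by linarith+
  have s1: "2 * (h / t) * (1 - c) / nv \<le> 2 * (h / t) * (2 * B\<^sup>2 / nw\<^sup>2) / nv"
    using c h t nvp by (intro divide_right_mono mult_left_mono) auto
  have prod: "nw * nv \<ge> (l * h / 2) * (l * h / 2)" using nw nv lh by (intro mult_mono) auto
  have "8 * h * B * l \<le> \<kappa> * ((l * h / 2) * (l * h / 2))"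
  proof -
    have "(l * h) * (32 * B) \<le> (l * h) * (\<kappa> * l * h)" using A1 lh by (intro mult_left_mono) auto
    then show ?thesis by (simp add: algebra_simps)
  qed
  also have "\<dots> \<le> \<kappa> * (nw * nv)" using prod k by (intro mult_left_mono) auto
  finally have p1: "8 * h * B * l \<le> \<kappa> * (nw * nv)" .
  have s2: "2 * (h / t) * (2 * B\<^sup>2 / nw\<^sup>2) / nv \<le> \<kappa> * B / (2 * t * l * nw)"
  proof -
    have "B * (8 * h * B * l) \<le> B * (\<kappa> * (nw * nv))" using p1 B by (rule mult_left_mono)
    then have "(t * nw) * (B * (8 * h * B * l)) \<le> (t * nw) * (B * (\<kappa> * (nw * nv)))"
      by (rule mult_left_mono) (use t nwp in auto)
    then have "(4 * h * B\<^sup>2) * (2 * t * l * nw) \<le> (\<kappa> * B) * (t * nw\<^sup>2 * nv)"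
      by (simp add: power2_eq_square algebra_simps)
    then have "(4 * h * B\<^sup>2) / (t * nw\<^sup>2 * nv) \<le> (\<kappa> * B) / (2 * t * l * nw)"
      using t nwp nvp l by (intro frac_cross) auto
    then show ?thesis using t nwp nvp by (simp add: field_simps power2_eq_square)
  qed
  have s3: "Y * X \<le> (2 * G / (t * nv)) * (2 * B / nw)"
    using X Y G B t nvp nwp by (intro mult_mono) auto
  have s4: "(2 * G / (t * nv)) * (2 * B / nw) \<le> \<kappa> * B / (2 * t * l * nw)"
  proof -
    have "8 * G * l \<le> \<kappa> * nv"
    proof -
      have "8 * G * l \<le> (\<kappa> * h / 2) * l" using A2 l by (intro mult_right_mono) auto
      also have "\<dots> = \<kappa> * (l * h / 2)" by simp
      also have "\<dots> \<le> \<kappa> * nv" using nv k by (intro mult_left_mono) auto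
      finally show ?thesis .
    qed
    then have "(B * t * nw) * (8 * G * l) \<le> (B * t * nw) * (\<kappa> * nv)" using B t nwp by (intro mult_left_mono) auto
    then have "(4 * G * B) * (2 * t * l * nw) \<le> (\<kappa> * B) * (t * nv * nw)" by (simp add: algebra_simps)
    then have "(4 * G * B) / (t * nv * nw) \<le> (\<kappa> * B) / (2 * t * l * nw)"
      using t nwp nvp l by (intro frac_cross) auto
    then show ?thesis using t nwp nvp by (simp add: field_simps)
  qed
  have "\<kappa> * B / (2 * t * l * nw) + \<kappa> * B / (2 * t * l * nw) = \<kappa> * B / (t * l * nw)" by (simp add: field_simps)
  moreover have "2 * (h / t) * (1 - c) / nv + Y * X \<le> \<kappa> * B / (2 * t * l * nw) + \<kappa> * B / (2 * t * l * nw)"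
    by (rule add_mono[OF order_trans[OF s1 s2] order_trans[OF s3 s4]])
  ultimately show ?thesis by simp
qed

theorem theorem5p1:
  fixes x :: "nat \<Rightarrow> real ^ 'n" and y :: "nat \<Rightarrow> real"
    and N :: nat and \<gamma> R \<eta> B :: real
    and w :: "nat \<Rightarrow> real ^ 'n" and \<rho> :: "nat \<Rightarrow> real ^ 'n" and wh :: "real ^ 'n"
  assumes labels: "\<forall>i<N. y i = -1 \<or> y i = 1"
    and gamma_pos: "\<gamma> > 0"
    and separable: "\<exists>ws. norm ws = 1 \<and> (\<forall>i<N. y i * (ws \<bullet> x i) > \<gamma> / 2)"
    and bounded: "\<forall>i<N. norm (x i) < R"
    and eta_pos: "\<eta> > 0"
    and gd: "\<forall>t. \<exists>g. GDERIV (emp_loss N x y) (w t) :> g \<and> w (Suc t) = w t - \<eta> *\<^sub>R g"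
    and svm: "is_max_margin N x y wh"
    and decomp: "\<forall>t\<ge>1. w t = ln (real t) *\<^sub>R wh + \<rho> t"
    and rho_bound: "\<forall>t\<ge>1. norm (\<rho> t) \<le> B"
  shows "\<exists>C T0. \<forall>t\<ge>T0.
     cos_angle (w (Suc t)) wh
       \<le> cos_angle (w t) wh
          + \<eta> * N * R * exp (B * R) * B * \<gamma> / (2 * real t * ln (real t) * norm (w t))
          + 3 * \<eta> * N * R * exp (B * R) * B\<^sup>2 * \<gamma>\<^sup>2 / (8 * real t * (ln (real t))\<^sup>2 * norm (w t))
          + C / ((real t)\<^sup>2 * (norm (w t))\<^sup>2)"
proof (cases "N = 0")
  case True
  have "(norm wh)\<^sup>2 \<le> (norm (0::real^'n))\<^sup>2" using svm True unfolding is_max_margin_def by blast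
  then have wh0: "wh = 0" by simp
  show ?thesis
    by (rule exI[of _ 0], rule exI[of _ 0]) (simp add: wh0 cos_angle_def True)
next
  case False
  then have Npos: "N > 0" by simp
  have Rpos: "R > 0" using bounded Npos by (metis norm_ge_zero le_less_trans)
  define z where "z i = y i *\<^sub>R x i" for i
  have zR: "\<forall>i<N. norm (z i) \<le> R"
  proof (intro allI impI)
    fix i assume i: "i < N"
    have "\<bar>y i\<bar> = 1" using labels i by auto
    then show "norm (z i) \<le> R" using bounded i by (simp add: z_def less_imp_le)
  qed
  have yz: "y i * (v \<bullet> x i) = v \<bullet> z i" for i v by (simp add: z_def)
  have marg: "\<forall>i<N. wh \<bullet> z i \<ge> 1" using svm unfolding is_max_margin_def by (simp add: yz)
  have upd: "\<forall>t. w (Suc t) = w t + \<eta> *\<^sub>R (\<Sum>i<N. (1 / (1 + exp (w t \<bullet> z i))) *\<^sub>R z i)"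
  proof
    fix t
    obtain g where g: "GDERIV (emp_loss N x y) (w t) :> g" "w (Suc t) = w t - \<eta> *\<^sub>R g" using gd by blast
    have "g = (\<Sum>i<N. (- (1 / (1 + exp (y i * (w t \<bullet> x i))))) *\<^sub>R (y i *\<^sub>R x i))"
      using gderiv_unique[OF g(1) emp_loss_grad] .
    then have "g = - (\<Sum>i<N. (1 / (1 + exp (w t \<bullet> z i))) *\<^sub>R z i)"
      by (simp add: yz z_def[symmetric] sum_negf[symmetric])
    then show "w (Suc t) = w t + \<eta> *\<^sub>R (\<Sum>i<N. (1 / (1 + exp (w t \<bullet> z i))) *\<^sub>R z i)"
      using g(2) by simp
  qed
  have B0: "B \<ge> 0" using rho_bound[rule_format, of 1] by (meson norm_ge_zero order_trans order_refl)
  define h where "h = norm wh"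
  have hpos: "h > 0"
  proof -
    have "wh \<bullet> z 0 \<ge> 1" using marg Npos by simp
    then have "wh \<noteq> 0" by auto
    then show ?thesis by (simp add: h_def)
  qed
  define \<kappa> where "\<kappa> = \<eta> * N * R * exp (B * R) * \<gamma> / 2"
  have kpos: "\<kappa> > 0" unfolding \<kappa>_def using eta_pos Npos Rpos gamma_pos by simp
  obtain Tg where Tg: "\<forall>t\<ge>Tg. norm (real t *\<^sub>R (w (Suc t) - w t) - wh) < \<kappa> * h / 16"
    using dynamics[OF Npos Rpos eta_pos B0 zR marg upd decomp rho_bound, of "\<kappa> * h / 16"] kpos hpos by auto
  define L0 where "L0 = max (2 * B / h) (32 * B / (\<kappa> * h)) + 1"
  define Tl where "Tl = nat \<lceil>exp L0\<rceil> + 2"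
  have key: "\<forall>t\<ge>max Tg Tl. cos_angle (w (Suc t)) wh
       \<le> cos_angle (w t) wh
          + \<eta> * N * R * exp (B * R) * B * \<gamma> / (2 * real t * ln (real t) * norm (w t))
          + 3 * \<eta> * N * R * exp (B * R) * B\<^sup>2 * \<gamma>\<^sup>2 / (8 * real t * (ln (real t))\<^sup>2 * norm (w t))
          + 0 / ((real t)\<^sup>2 * (norm (w t))\<^sup>2)"
  proof (intro allI impI)
    fix t assume tT: "max Tg Tl \<le> t"
    then have tTg: "t \<ge> Tg" and tTl: "t \<ge> Tl" by auto
    have t2: "real t \<ge> 2" using tTl by (simp add: Tl_def)
    have tpos: "real t > 0" using t2 by simp
    have t1: "t \<ge> 1" using t2 by simp
    define l where "l = ln (real t)"
    have lL0: "l \<ge> L0"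
    proof -
      have "exp L0 \<le> real t" using tTl unfolding Tl_def by linarith
      then show ?thesis unfolding l_def using tpos by (metis ln_exp ln_le_cancel_iff exp_gt_zero)
    qed
    have lpos: "l > 0" unfolding l_def using t2 by simp
    have lh1: "l * h \<ge> 2 * B"
    proof -
      have "l \<ge> 2 * B / h" using lL0 unfolding L0_def by linarith
      then show ?thesis using hpos by (simp add: field_simps)
    qed
    have lh2: "\<kappa> * l * h \<ge> 32 * B"
    proof -
      have "l \<ge> 32 * B / (\<kappa> * h)" using lL0 unfolding L0_def by linarith
      then show ?thesis using hpos kpos by (simp add: field_simps)
    qed
    define W where "W = w t"
    define u where "u = (1 / h) *\<^sub>R wh"
    have u1: "norm u = 1" using hpos by (simp add: u_def h_def)
    have whu: "wh = h *\<^sub>R u" using hpos by (simp add: u_def)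
    have Wdec: "W = l *\<^sub>R wh + \<rho> t" using decomp t1 by (simp add: W_def l_def)
    have rB: "norm (\<rho> t) \<le> B" using rho_bound t1 by simp
    have nw: "norm W \<ge> l * h / 2"
    proof -
      have "norm (l *\<^sub>R wh) - norm (\<rho> t) \<le> norm W" unfolding Wdec by (metis norm_diff_ineq)
      moreover have "norm (l *\<^sub>R wh) = l * h" using lpos by (simp add: h_def)
      ultimately show ?thesis using rB lh1 by linarith
    qed
    have W0: "W \<noteq> 0" using nw lpos hpos by (metis divide_pos_pos mult_pos_pos norm_zero not_less zero_less_numeral)
    define v where "v = W + (h / t) *\<^sub>R u"
    have vdec: "v = (l + 1 / t) *\<^sub>R wh + \<rho> t" unfolding v_def Wdec whu using hpos by (simp add: algebra_simps)
    have nv: "norm v \<ge> l * h / 2"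
    proof -
      have "norm ((l + 1 / t) *\<^sub>R wh) - norm (\<rho> t) \<le> norm v" unfolding vdec by (metis norm_diff_ineq)
      moreover have "norm ((l + 1 / t) *\<^sub>R wh) = (l + 1 / t) * h" using lpos tpos by (simp add: h_def)
      moreover have "(l + 1 / t) * h \<ge> l * h" using hpos tpos by (simp add: distrib_right)
      ultimately show ?thesis using rB lh1 by linarith
    qed
    have v0: "v \<noteq> 0" using nv lpos hpos by (metis divide_pos_pos mult_pos_pos norm_zero not_less zero_less_numeral)
    define g where "g = real t *\<^sub>R (w (Suc t) - w t) - wh"
    define ev where "ev = (1 / t) *\<^sub>R g"
    have vev: "v + ev = w (Suc t)" unfolding v_def ev_def g_def W_def whu
      using tpos hpos by (simp add: algebra_simps)
    have cosW: "cos_angle W wh = ((1 / norm W) *\<^sub>R W) \<bullet> u"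
      unfolding cos_angle_def u_def h_def by simp
    have cosW': "cos_angle (w (Suc t)) wh = ((1 / norm (v + ev)) *\<^sub>R (v + ev)) \<bullet> u"
      unfolding cos_angle_def u_def h_def vev[symmetric] by simp
    have hstep: "0 \<le> h / t" using hpos tpos by simp
    have v0': "W + (h / t) *\<^sub>R u \<noteq> 0" using v0 v_def by simp
    note cs = cos_step[OF u1 W0 hstep v0', of ev, unfolded v_def[symmetric]]
    define a where "a = (1 / norm W) *\<^sub>R W"
    define c where "c = a \<bullet> u"
    define X where "X = norm (u - a)"
    define Y where "Y = norm ((1 / norm (v + ev)) *\<^sub>R (v + ev) - (1 / norm v) *\<^sub>R v)"
    define G where "G = norm g"
    have Xb: "X \<le> 2 * B / norm W"
    proof -
      have "norm (a - u) \<le> 2 * norm (W - (l * h) *\<^sub>R u) / norm W"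
        unfolding a_def using lpos hpos by (intro dir_close[OF W0 u1]) auto
      also have "W - (l * h) *\<^sub>R u = \<rho> t" unfolding Wdec whu by simp
      finally have "X \<le> 2 * norm (\<rho> t) / norm W" unfolding X_def by (simp add: norm_minus_commute)
      also have "\<dots> \<le> 2 * B / norm W" using rB W0 by (simp add: divide_right_mono)
      finally show ?thesis .
    qed
    have X0: "X \<ge> 0" by (simp add: X_def)
    have cX: "1 - c = X\<^sup>2 / 2"
    proof -
      have na: "norm a = 1" using W0 by (simp add: a_def)
      have "X\<^sup>2 = (u - a) \<bullet> (u - a)" by (simp add: X_def power2_norm_eq_inner)
      also have "\<dots> = u \<bullet> u - 2 * c + a \<bullet> a" by (simp add: c_def inner_diff_left inner_diff_right inner_commute)
      also have "u \<bullet> u = 1" using u1 by (simp add: power2_norm_eq_inner[symmetric])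
      also have "a \<bullet> a = 1" using na by (simp add: power2_norm_eq_inner[symmetric])
      finally show ?thesis by simp
    qed
    have cb: "1 - c \<le> 2 * B\<^sup>2 / (norm W)\<^sup>2"
    proof -
      have "X\<^sup>2 \<le> (2 * B / norm W)\<^sup>2" using Xb X0 by (intro power_mono) auto
      then show ?thesis unfolding cX by (simp add: power_divide)
    qed
    have Yb: "Y \<le> 2 * G / (real t * norm v)"
    proof -
      have "Y \<le> 2 * norm (v - (v + ev)) / norm v"
        unfolding Y_def using normalize_diff[OF v0, of "v + ev"] by (simp add: norm_minus_commute)
      also have "norm (v - (v + ev)) = G / t" unfolding ev_def G_def using tpos by simp
      finally show ?thesis by simp
    qed
    have Y0: "Y \<ge> 0" by (simp add: Y_def)
    have G0: "G \<ge> 0" by (simp add: G_def)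
    have Gb: "16 * G \<le> \<kappa> * h" using Tg[rule_format, OF tTg] unfolding G_def g_def by linarith
    have fa: "2 * (h / t) * (1 - c) / norm v + Y * X \<le> \<kappa> * B / (t * l * norm W)"
      by (rule final_arith[OF hpos B0 kpos tpos lpos lh2 Gb G0 nw nv cb X0 Xb Y0 Yb])
    have "cos_angle (w (Suc t)) wh - cos_angle (w t) wh \<le> 2 * (h / t) * (1 - c) / norm v + Y * X"
      using cs unfolding cosW' W_def[symmetric] cosW Y_def X_def c_def a_def by (simp add: mult.commute)
    then have main: "cos_angle (w (Suc t)) wh \<le> cos_angle (w t) wh + \<kappa> * B / (t * l * norm W)"
      using fa by linarith
    have e1: "\<eta> * N * R * exp (B * R) * B * \<gamma> / (2 * real t * ln (real t) * norm (w t)) = \<kappa> * B / (t * l * norm W)"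
      unfolding \<kappa>_def l_def W_def by (simp add: field_simps)
    have e2: "3 * \<eta> * N * R * exp (B * R) * B\<^sup>2 * \<gamma>\<^sup>2 / (8 * real t * (ln (real t))\<^sup>2 * norm (w t)) \<ge> 0"
      using eta_pos Rpos B0 by (intro divide_nonneg_nonneg mult_nonneg_nonneg) auto
    show "cos_angle (w (Suc t)) wh
       \<le> cos_angle (w t) wh
          + \<eta> * N * R * exp (B * R) * B * \<gamma> / (2 * real t * ln (real t) * norm (w t))
          + 3 * \<eta> * N * R * exp (B * R) * B\<^sup>2 * \<gamma>\<^sup>2 / (8 * real t * (ln (real t))\<^sup>2 * norm (w t))
          + 0 / ((real t)\<^sup>2 * (norm (w t))\<^sup>2)"
      using main e1 e2 by simp
  qed
  show ?thesis by (rule exI[of _ 0], rule exI[of _ "max Tg Tl"]) (rule key)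
qed


end
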